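(* Let $\mathcal{R}$ be a field and $(\mathcal{C}^{\bullet},\partial)$ a bigraded cochain complex of $\mathcal{R}$-vector spaces as in the context. Then there are vector space isomorphisms \[ B^{3}(\mathcal{C},\partial)\cong(B^{3}(\mathcal{C},\partial)\cap\mathcal{C}^{3,0})\oplus(\mathcal{B}^{3}_{1}\cap\mathcal{C}^{2,1})\oplus(\mathcal{B}^{3}_{2}\cap\mathcal{C}^{1,2})\oplus B^{3}(\mathcal{C}^{0,\bullet},\partial_{0,1}), \] \[ Z^{3}(\mathcal{C},\partial)\cong Z^{3}(\mathcal{N}_{0},\overline{\partial})\oplus\ker(\varrho_{3})\oplus(\mathcal{Z}^{3}_{2}\cap\mathcal{C}^{1,2})\oplus\mathcal{Z}^{3}_{3}, \] \[ H^{3}(\mathcal{C},\partial)\cong\frac{Z^{3}(\mathcal{N}_{0},\overline{\partial})}{B^{3}(\mathcal{C},\partial)\cap\mathcal{C}^{3,0}}\oplus\frac{\ker(\varrho_{3})}{\mathcal{B}^{3}_{1}\cap\mathcal{C}^{2,1}}\oplus\frac{\mathcal{Z}^{3}_{2}\cap\mathcal{C}^{1,2}}{\mathcal{B}^{3}_{2}\cap\mathcal{C}^{1,2}}\oplus\frac{\mathcal{Z}^{3}_{3}}{B^{3}(\mathcal{C}^{0,\bullet},\partial_{0,1})}. \]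
   Context: Setting: $\mathcal{C}^{k}=\bigoplus_{p+q=k}\mathcal{C}^{p,q}$ with $\mathcal{C}^{p,q}=\{0\}$ if $p<0$ or $q<0$; $\partial$ is linear of degree $1$, $\partial^{2}=0$, $\partial=\partial_{2,-1}+\partial_{1,0}+\partial_{0,1}$ with $\partial_{i,j}(\mathcal{C}^{p,q})\subseteq\mathcal{C}^{p+i,q+j}$. For $\eta\in\mathcal{C}^k$, $\eta_{p,q}$ is its $\mathcal{C}^{p,q}$-component. $G^{q}\mathcal{C}:=\bigoplus_{j\geq q}\mathcal{C}^{i,j}$, $\pi_{q}:\mathcal{C}\to G^{q}\mathcal{C}$ the projection along the bigrading. $(\mathcal{C}^{0,\bullet},\partial_{0,1})$ is a cochain complex. $\mathcal{N}^{p,q}:=\ker(\partial_{0,1}|_{\mathcal{C}^{p,q}})\cap\ker(\partial_{2,-1}|_{\mathcal{C}^{p,q}})$, $\mathcal{N}_{q}:=\bigoplus_{p}\mathcal{N}^{p-q,q}$ (degree-$m$ part $\mathcal{N}^{m-q,q}$), a subcomplex with differential $\overline{\partial}:=\partial|_{\mathcal{N}_q}$. $\mathcal{M}^{k}:=\{\eta\in\mathcal{C}^{k}\mid(\partial\eta)_{i,j}\in B^{k+1}(\mathcal{N}_{j},\overline{\partial})\ \forall\, i+j=k+1\}$; $\mathcal{Z}^{k}_{q}:=\{\pi_{q}(\eta)\mid\eta\in\mathcal{M}^{k},\ \pi_{q}(\partial\eta)=0\}$; $\mathcal{B}^{k}_{q}:=\pi_{q}(B^{k}(\mathcal{C},\partial))$.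 $\mathcal{A}^{k}:=\{\pi_{1}(\eta)\mid\eta\in\mathcal{C}^{k},\ \pi_{1}(\partial\eta)=0\}$, $\mathcal{J}^{k}:=\mathcal{A}^{k}\cap\mathcal{C}^{k-1,1}$. For $\xi\in\mathcal{A}^{k}$ and any $\eta$ with $\pi_{1}\eta=\xi$, $\pi_{1}(\partial\eta)=0$, the class $[\partial_{2,-1}\xi_{k-1,1}+\partial_{1,0}\eta_{k,0}]\in H^{k+1}(\mathcal{N}_{0},\overline\partial)$ depends only on $\xi$, defining the linear map $\rho_{k}:\mathcal{A}^{k}\to H^{k+1}(\mathcal{N}_{0},\overline{\partial})$; $\varrho_{k}:=\rho_{k}|_{\mathcal{J}^{k}}$. *)

theory Defs
  imports Complex_Main
begin

text \<open>A bigraded space: an ambient vector space 'v (over a field 'r, scalar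
multiplication sc) which is the internal direct sum of subspaces C p q, p q :: nat
(so C^{p,q} = 0 for negative indices automatically).\<close>

definition decomp :: "(nat \<Rightarrow> nat \<Rightarrow> 'v::ab_group_add set) \<Rightarrow> 'v \<Rightarrow> (nat \<Rightarrow> nat \<Rightarrow> 'v) \<Rightarrow> bool" where
  "decomp C v c \<longleftrightarrow> (\<forall>p q. c p q \<in> C p q) \<and> finite {(p,q). c p q \<noteq> 0}
      \<and> v = (\<Sum>(p,q)\<in>{(p,q). c p q \<noteq> 0}. c p q)"

definition comp :: "(nat \<Rightarrow> nat \<Rightarrow> 'v::ab_group_add set) \<Rightarrow> 'v \<Rightarrow> nat \<Rightarrow> nat \<Rightarrow> 'v" where
  "comp C v = (THE c. decomp C v c)"

definition Ck :: "(nat \<Rightarrow> nat \<Rightarrow> 'v::ab_group_add set) \<Rightarrow> nat \<Rightarrow> 'v set" where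
  "Ck C k = {v. \<forall>p q. comp C v p q \<noteq> 0 \<longrightarrow> p + q = k}"

definition piq :: "(nat \<Rightarrow> nat \<Rightarrow> 'v::ab_group_add set) \<Rightarrow> nat \<Rightarrow> 'v \<Rightarrow> 'v" where
  "piq C q v = (\<Sum>(i,j)\<in>{(i,j). comp C v i j \<noteq> 0 \<and> q \<le> j}. comp C v i j)"

definition bigraded_complex ::
  "('r::field \<Rightarrow> 'v::ab_group_add \<Rightarrow> 'v) \<Rightarrow> (nat \<Rightarrow> nat \<Rightarrow> 'v set)
    \<Rightarrow> ('v \<Rightarrow> 'v) \<Rightarrow> ('v \<Rightarrow> 'v) \<Rightarrow> ('v \<Rightarrow> 'v) \<Rightarrow> ('v \<Rightarrow> 'v) \<Rightarrow> bool" where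
  "bigraded_complex sc C d d21 d10 d01 \<longleftrightarrow>
     vector_space sc
   \<and> (\<forall>p q. 0 \<in> C p q \<and> (\<forall>x\<in>C p q. \<forall>y\<in>C p q. x + y \<in> C p q) \<and> (\<forall>c. \<forall>x\<in>C p q. sc c x \<in> C p q))
   \<and> (\<forall>v. \<exists>!c. decomp C v c)
   \<and> Vector_Spaces.linear sc sc d \<and> Vector_Spaces.linear sc sc d21
   \<and> Vector_Spaces.linear sc sc d10 \<and> Vector_Spaces.linear sc sc d01
   \<and> (\<forall>v. d (d v) = 0)
   \<and> (\<forall>v. d v = d21 v + d10 v + d01 v)
   \<and> (\<forall>p q. \<forall>v\<in>C p q. d21 v \<in> (if q = 0 then {0} else C (p+2) (q-1)))
   \<and> (\<forall>p q. \<forall>v\<in>C p q. d10 v \<in> C (p+1) q)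
   \<and> (\<forall>p q. \<forall>v\<in>C p q. d01 v \<in> C p (q+1))"

definition Zd :: "(nat \<Rightarrow> nat \<Rightarrow> 'v::ab_group_add set) \<Rightarrow> ('v \<Rightarrow> 'v) \<Rightarrow> nat \<Rightarrow> 'v set" where
  "Zd C d k = {x \<in> Ck C k. d x = 0}"

definition Bd :: "(nat \<Rightarrow> nat \<Rightarrow> 'v::ab_group_add set) \<Rightarrow> ('v \<Rightarrow> 'v) \<Rightarrow> nat \<Rightarrow> 'v set" where
  "Bd C d k = {y \<in> Ck C k. \<exists>x. y = d x}"

definition B0 :: "(nat \<Rightarrow> nat \<Rightarrow> 'v::ab_group_add set) \<Rightarrow> ('v \<Rightarrow> 'v) \<Rightarrow> nat \<Rightarrow> 'v set" where
  "B0 C d01 k = (if k = 0 then {0} else d01 ` C 0 (k - 1))"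

definition Npq :: "(nat \<Rightarrow> nat \<Rightarrow> 'v::ab_group_add set) \<Rightarrow> ('v \<Rightarrow> 'v) \<Rightarrow> ('v \<Rightarrow> 'v) \<Rightarrow> nat \<Rightarrow> nat \<Rightarrow> 'v set" where
  "Npq C d21 d01 p q = {v \<in> C p q. d01 v = 0 \<and> d21 v = 0}"

definition Nq :: "(nat \<Rightarrow> nat \<Rightarrow> 'v::ab_group_add set) \<Rightarrow> ('v \<Rightarrow> 'v) \<Rightarrow> ('v \<Rightarrow> 'v) \<Rightarrow> nat \<Rightarrow> nat \<Rightarrow> 'v set" where
  "Nq C d21 d01 q m = (if q \<le> m then Npq C d21 d01 (m - q) q else {0})"

definition BN :: "(nat \<Rightarrow> nat \<Rightarrow> 'v::ab_group_add set) \<Rightarrow> ('v \<Rightarrow> 'v) \<Rightarrow> ('v \<Rightarrow> 'v) \<Rightarrow> ('v \<Rightarrow> 'v) \<Rightarrow> nat \<Rightarrow> nat \<Rightarrow> 'v set" where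
  "BN C d d21 d01 q k = (if k = 0 then {0} else d ` Nq C d21 d01 q (k - 1))"

definition ZN :: "(nat \<Rightarrow> nat \<Rightarrow> 'v::ab_group_add set) \<Rightarrow> ('v \<Rightarrow> 'v) \<Rightarrow> ('v \<Rightarrow> 'v) \<Rightarrow> ('v \<Rightarrow> 'v) \<Rightarrow> nat \<Rightarrow> nat \<Rightarrow> 'v set" where
  "ZN C d d21 d01 q k = {x \<in> Nq C d21 d01 q k. d x = 0}"

definition Mk :: "(nat \<Rightarrow> nat \<Rightarrow> 'v::ab_group_add set) \<Rightarrow> ('v \<Rightarrow> 'v) \<Rightarrow> ('v \<Rightarrow> 'v) \<Rightarrow> ('v \<Rightarrow> 'v) \<Rightarrow> nat \<Rightarrow> 'v set" where
  "Mk C d d21 d01 k = {\<eta> \<in> Ck C k. \<forall>i j. i + j = k + 1 \<longrightarrow> comp C (d \<eta>) i j \<in> BN C d d21 d01 j (k + 1)}"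

definition Zcal :: "(nat \<Rightarrow> nat \<Rightarrow> 'v::ab_group_add set) \<Rightarrow> ('v \<Rightarrow> 'v) \<Rightarrow> ('v \<Rightarrow> 'v) \<Rightarrow> ('v \<Rightarrow> 'v) \<Rightarrow> nat \<Rightarrow> nat \<Rightarrow> 'v set" where
  "Zcal C d d21 d01 k q = {piq C q \<eta> | \<eta>. \<eta> \<in> Mk C d d21 d01 k \<and> piq C q (d \<eta>) = 0}"

definition Bcal :: "(nat \<Rightarrow> nat \<Rightarrow> 'v::ab_group_add set) \<Rightarrow> ('v \<Rightarrow> 'v) \<Rightarrow> nat \<Rightarrow> nat \<Rightarrow> 'v set" where
  "Bcal C d k q = piq C q ` Bd C d k"

definition Acal :: "(nat \<Rightarrow> nat \<Rightarrow> 'v::ab_group_add set) \<Rightarrow> ('v \<Rightarrow> 'v) \<Rightarrow> nat \<Rightarrow> 'v set" where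
  "Acal C d k = {piq C 1 \<eta> | \<eta>. \<eta> \<in> Ck C k \<and> piq C 1 (d \<eta>) = 0}"

definition Jcal :: "(nat \<Rightarrow> nat \<Rightarrow> 'v::ab_group_add set) \<Rightarrow> ('v \<Rightarrow> 'v) \<Rightarrow> nat \<Rightarrow> 'v set" where
  "Jcal C d k = Acal C d k \<inter> C (k - 1) 1"

text \<open>ker(varrho_k): those xi in J^k whose class
  [d21 xi_{k-1,1} + d10 eta_{k,0}] in H^{k+1}(N_0) vanishes, for a lift eta of xi
  (the class is independent of the lift, so "some lift" = "every lift").\<close>
definition ker_varrho :: "(nat \<Rightarrow> nat \<Rightarrow> 'v::ab_group_add set) \<Rightarrow> ('v \<Rightarrow> 'v) \<Rightarrow> ('v \<Rightarrow> 'v) \<Rightarrow> ('v \<Rightarrow> 'v) \<Rightarrow> ('v \<Rightarrow> 'v) \<Rightarrow> nat \<Rightarrow> 'v set" where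
  "ker_varrho C d d21 d10 d01 k = {\<xi> \<in> Jcal C d k. \<exists>\<eta>. \<eta> \<in> Ck C k \<and> piq C 1 \<eta> = \<xi> \<and> piq C 1 (d \<eta>) = 0 \<and>
      d21 (comp C \<xi> (k - 1) 1) + d10 (comp C \<eta> k 0) \<in> BN C d d21 d01 0 (k + 1)}"

text \<open>A linear isomorphism of quotient spaces A/B \<cong> (X_1/Y_1) \<oplus> ... \<oplus> (X_n/Y_n)
  (list L = [(X_1,Y_1),...]), expressed through a lift: a linear map f = (f_1,...,f_n)
  on A with f_i(A) \<subseteq> X_i inducing a well-defined, injective and surjective map on the
  quotients. For B = {0}, Y_i = {0} this is just a linear bijection A \<cong> X_1 \<oplus> ... \<oplus> X_n.\<close>
definition quot_sum_iso :: "('r \<Rightarrow> 'v::ab_group_add \<Rightarrow> 'v) \<Rightarrow> 'v set \<Rightarrow> 'v set \<Rightarrow> ('v set \<times> 'v set) list \<Rightarrow> bool" where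
  "quot_sum_iso sc A B L \<longleftrightarrow> (\<exists>f :: nat \<Rightarrow> 'v \<Rightarrow> 'v.
      (\<forall>i<length L. (\<forall>x\<in>A. \<forall>y\<in>A. f i (x + y) = f i x + f i y)
                   \<and> (\<forall>c. \<forall>x\<in>A. f i (sc c x) = sc c (f i x))
                   \<and> (\<forall>x\<in>A. f i x \<in> fst (L ! i)))
    \<and> (\<forall>x\<in>A. x \<in> B \<longleftrightarrow> (\<forall>i<length L. f i x \<in> snd (L ! i)))
    \<and> (\<forall>y. (\<forall>i<length L. y i \<in> fst (L ! i)) \<longrightarrow> (\<exists>x\<in>A. \<forall>i<length L. y i - f i x \<in> snd (L ! i))))"

end

theory Submission
  imports Defs
begin


context vector_space begin

lemma section_exists:
  assumes A: "subspace A" and B: "subspace B" and BA: "B \<subseteq> A"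
    and P: "Vector_Spaces.linear scale scale P"
  shows "\<exists>s. Vector_Spaces.linear scale scale s \<and> s ` (P ` A) \<subseteq> A \<and> (\<forall>v\<in>P ` A. P (s v) = v) \<and> s ` (P ` B) \<subseteq> B"
proof -
  interpret p: vector_space_pair scale scale by unfold_locales
  obtain CB where CB: "CB \<subseteq> P ` B" "independent CB" "P ` B \<subseteq> span CB"
    using maximal_independent_subset[of "P ` B"] by blast
  obtain C where C: "CB \<subseteq> C" "C \<subseteq> P ` A" "independent C" "P ` A \<subseteq> span C"
  proof -
    have "CB \<subseteq> P ` A" using CB(1) BA by (meson image_mono order_trans)
    then show ?thesis using maximal_independent_subset_extend[of CB "P ` A"] CB(2) that by blast
  qed
  have "\<forall>v\<in>C. \<exists>b. (v \<in> CB \<longrightarrow> b \<in> B) \<and> b \<in> A \<and> P b = v"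
    using CB(1) C(2) BA by (metis (no_types, lifting) imageE subsetD)
  then obtain g where g: "\<And>v. v \<in> C \<Longrightarrow> (v \<in> CB \<longrightarrow> g v \<in> B) \<and> g v \<in> A \<and> P (g v) = v"
    by metis
  let ?s = "p.construct C g"
  have ls: "Vector_Spaces.linear scale scale ?s" by (rule p.linear_construct[OF C(3)])
  have sb: "\<And>v. v \<in> C \<Longrightarrow> ?s v = g v" using p.construct_basis[OF C(3)] by blast
  have r1: "?s ` (P ` A) \<subseteq> A"
  proof -
    have "?s v \<in> span (g ` C)" for v by (rule p.construct_in_span[OF C(3)])
    moreover have "span (g ` C) \<subseteq> A" using g A by (intro span_minimal) auto
    ultimately show ?thesis by auto
  qed
  have r2: "\<forall>v\<in>P ` A. P (?s v) = v"
  proof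
    fix v assume v: "v \<in> P ` A"
    have "(P \<circ> ?s) v = id v"
    proof (rule p.linear_eq_on[where x=v and B=C])
      show "Vector_Spaces.linear scale scale (P \<circ> ?s)"
        by (rule Vector_Spaces.linear_compose[OF ls P])
      show "Vector_Spaces.linear scale scale id" by (rule linear_id)
      show "v \<in> span C" using v C by auto
      show "(P \<circ> ?s) b = id b" if "b \<in> C" for b using that sb g by auto
    qed
    then show "P (?s v) = v" by simp
  qed
  have r3: "?s ` (P ` B) \<subseteq> B"
  proof
    fix w assume "w \<in> ?s ` (P ` B)"
    then obtain v where v: "v \<in> P ` B" "w = ?s v" by auto
    have "v \<in> span CB" using v CB by auto
    then have "?s v \<in> ?s ` span CB" by auto
    also have "?s ` span CB = span (?s ` CB)" by (rule p.linear_span_image[OF ls, symmetric])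
    also have "\<dots> \<subseteq> B" using sb g CB C B by (intro span_minimal) auto
    finally show "w \<in> B" using v by simp
  qed
  show ?thesis using ls r1 r2 r3 by blast
qed

end

lemma qsi_base:
  assumes "A \<subseteq> B" "0 \<in> A"
  shows "quot_sum_iso sc A B []"
  using assms unfolding quot_sum_iso_def by auto

lemma qsi_peel:
  fixes sc :: "'r::field \<Rightarrow> 'v::ab_group_add \<Rightarrow> 'v"
  assumes vs: "vector_space sc"
    and A: "module.subspace sc A" and B: "module.subspace sc B" and BA: "B \<subseteq> A"
    and P: "Vector_Spaces.linear sc sc P"
    and A': "A' = {z\<in>A. P z = 0}" and B': "B' = B \<inter> A'"
    and IH: "quot_sum_iso sc A' B' L"
    and X: "X = P ` A" and Y: "Y = P ` B"
  shows "quot_sum_iso sc A B (L @ [(X,Y)])"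
proof -
  interpret V: vector_space sc by fact
  interpret lP: Vector_Spaces.linear sc sc P by fact
  from V.section_exists[OF A B BA P] obtain s where sall: "Vector_Spaces.linear sc sc s \<and> s ` (P ` A) \<subseteq> A
    \<and> (\<forall>v\<in>P ` A. P (s v) = v) \<and> s ` (P ` B) \<subseteq> B" ..
  note ls = conjunct1[OF sall]
  note s1 = conjunct1[OF conjunct2[OF sall]]
  note s2 = conjunct1[OF conjunct2[OF conjunct2[OF sall]]]
  note s3 = conjunct2[OF conjunct2[OF conjunct2[OF sall]]]
  interpret lS: Vector_Spaces.linear sc sc s by fact
  obtain f' where f1: "\<forall>i<length L. (\<forall>x\<in>A'. \<forall>y\<in>A'. f' i (x + y) = f' i x + f' i y)
                   \<and> (\<forall>c. \<forall>x\<in>A'. f' i (sc c x) = sc c (f' i x))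
                   \<and> (\<forall>x\<in>A'. f' i x \<in> fst (L ! i))"
    and f2: "\<forall>x\<in>A'. x \<in> B' \<longleftrightarrow> (\<forall>i<length L. f' i x \<in> snd (L ! i))"
    and f3: "\<forall>y. (\<forall>i<length L. y i \<in> fst (L ! i)) \<longrightarrow> (\<exists>x\<in>A'. \<forall>i<length L. y i - f' i x \<in> snd (L ! i))"
    using IH unfolding quot_sum_iso_def by blast
  define r where "r z = z - s (P z)" for z
  have rA: "r z \<in> A'" if "z \<in> A" for z
  proof -
    have "s (P z) \<in> A" using s1 that by blast
    then have "r z \<in> A" unfolding r_def using that A V.subspace_diff by blast
    moreover have "P (r z) = 0" unfolding r_def using s2 that by (simp add: lP.diff)
    ultimately show ?thesis using A' by blast
  qed
  have rB: "r z \<in> B'" if "z \<in> B" for z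
  proof -
    have "s (P z) \<in> B" using s3 that by blast
    then have "r z \<in> B" unfolding r_def using that B V.subspace_diff by blast
    moreover have "z \<in> A" using that BA by blast
    ultimately show ?thesis using rA B' by blast
  qed
  have radd: "r (x + y) = r x + r y" for x y unfolding r_def by (simp add: lP.add lS.add)
  have rsc: "r (sc c x) = sc c (r x)" for c x unfolding r_def by (simp add: lP.scale lS.scale V.scale_right_diff_distrib)
  define f where "f i = (if i < length L then (\<lambda>z. f' i (r z)) else P)" for i
  have len: "length (L @ [(X,Y)]) = Suc (length L)" by simp
  have nth1: "(L @ [(X,Y)]) ! i = L ! i" if "i < length L" for i using that by (simp add: nth_append)
  have nth2: "(L @ [(X,Y)]) ! length L = (X,Y)" by simp
  have c1: "\<forall>i<length (L @ [(X,Y)]). (\<forall>x\<in>A. \<forall>y\<in>A. f i (x + y) = f i x + f i y)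
                   \<and> (\<forall>c. \<forall>x\<in>A. f i (sc c x) = sc c (f i x))
                   \<and> (\<forall>x\<in>A. f i x \<in> fst ((L @ [(X,Y)]) ! i))"
  proof (intro allI impI)
    fix i assume "i < length (L @ [(X,Y)])"
    then consider "i < length L" | "i = length L" by fastforce
    then show "(\<forall>x\<in>A. \<forall>y\<in>A. f i (x + y) = f i x + f i y)
                   \<and> (\<forall>c. \<forall>x\<in>A. f i (sc c x) = sc c (f i x))
                   \<and> (\<forall>x\<in>A. f i x \<in> fst ((L @ [(X,Y)]) ! i))"
    proof cases
      case 1
      then show ?thesis using f1 rA unfolding f_def by (simp add: nth1 radd rsc)
    next
      case 2
      then show ?thesis unfolding f_def using X by (simp add: lP.add lP.scale)
    qed
  qed
  have c2: "\<forall>x\<in>A. x \<in> B \<longleftrightarrow> (\<forall>i<length (L @ [(X,Y)]). f i x \<in> snd ((L @ [(X,Y)]) ! i))"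
  proof
    fix x assume xA: "x \<in> A"
    have eq: "(\<forall>i<length (L @ [(X,Y)]). f i x \<in> snd ((L @ [(X,Y)]) ! i))
       \<longleftrightarrow> (\<forall>i<length L. f' i (r x) \<in> snd (L ! i)) \<and> P x \<in> Y"
      unfolding len f_def using nth1 nth2 less_Suc_eq by auto
    show "x \<in> B \<longleftrightarrow> (\<forall>i<length (L @ [(X,Y)]). f i x \<in> snd ((L @ [(X,Y)]) ! i))"
    proof
      assume "x \<in> B"
      then show "\<forall>i<length (L @ [(X,Y)]). f i x \<in> snd ((L @ [(X,Y)]) ! i)"
        unfolding eq using rB f2 rA xA Y by blast
    next
      assume "\<forall>i<length (L @ [(X,Y)]). f i x \<in> snd ((L @ [(X,Y)]) ! i)"
      then have h: "\<forall>i<length L. f' i (r x) \<in> snd (L ! i)" "P x \<in> Y" unfolding eq by auto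
      have "r x \<in> B'" using f2 rA[OF xA] h(1) by blast
      moreover have "s (P x) \<in> B" using h(2) Y s3 by blast
      ultimately have "r x + s (P x) \<in> B" using B' B V.subspace_add by blast
      then show "x \<in> B" unfolding r_def by simp
    qed
  qed
  have c3: "\<forall>y. (\<forall>i<length (L @ [(X,Y)]). y i \<in> fst ((L @ [(X,Y)]) ! i)) \<longrightarrow>
       (\<exists>x\<in>A. \<forall>i<length (L @ [(X,Y)]). y i - f i x \<in> snd ((L @ [(X,Y)]) ! i))"
  proof (intro allI impI)
    fix y assume hy: "\<forall>i<length (L @ [(X,Y)]). y i \<in> fst ((L @ [(X,Y)]) ! i)"
    have hy1: "\<forall>i<length L. y i \<in> fst (L ! i)"
    proof (intro allI impI)
      fix i assume "i < length L"
      then show "y i \<in> fst (L ! i)" using hy[rule_format, of i] by (simp add: nth_append)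
    qed
    have hy2: "y (length L) \<in> X"
      using hy[rule_format, of "length L"] by simp
    obtain x' where x': "x' \<in> A'" "\<forall>i<length L. y i - f' i x' \<in> snd (L ! i)"
      using f3 hy1 by blast
    define x where "x = x' + s (y (length L))"
    have x'A: "x' \<in> A" and Px': "P x' = 0" using x'(1) A' by auto
    have sA: "s (y (length L)) \<in> A" using hy2 X s1 by blast
    have xA: "x \<in> A" unfolding x_def using x'A sA A V.subspace_add by blast
    have "P (s (y (length L))) = y (length L)" using s2 hy2 X by blast
    then have Px: "P x = y (length L)" unfolding x_def using Px' by (simp add: lP.add)
    have rx: "r x = x'" unfolding r_def Px unfolding x_def by simp
    have "0 \<in> Y" using Y B V.subspace_0 lP.zero by (metis image_eqI)
    then show "\<exists>x\<in>A. \<forall>i<length (L @ [(X,Y)]). y i - f i x \<in> snd ((L @ [(X,Y)]) ! i)"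
      using xA x'(2) Px rx
      by (intro bexI[of _ x]) (auto simp: len f_def nth1 less_Suc_eq)
  qed
  show ?thesis unfolding quot_sum_iso_def using c1 c2 c3 by blast
qed



lemma linD:
  fixes sc :: "'r::field \<Rightarrow> 'v::ab_group_add \<Rightarrow> 'v"
  assumes "Vector_Spaces.linear sc sc f"
  shows "f (x + y) = f x + f y" "f (sc c x) = sc c (f x)" "f 0 = 0" "f (x - y) = f x - f y" "f (- x) = - f x"
    "finite S \<Longrightarrow> f (\<Sum>a\<in>S. g a) = (\<Sum>a\<in>S. f (g a))"
proof -
  interpret l: Vector_Spaces.linear sc sc f by fact
  show "f (x + y) = f x + f y" by (rule l.add)
  show "f (sc c x) = sc c (f x)" by (rule l.scale)
  show "f 0 = 0" by (rule l.zero)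
  show "f (x - y) = f x - f y" by (rule l.diff)
  show "f (- x) = - f x" by (rule l.neg)
  show "finite S \<Longrightarrow> f (\<Sum>a\<in>S. g a) = (\<Sum>a\<in>S. f (g a))" by (rule l.sum)
qed

locale BCx =
  fixes sc :: "'r::field \<Rightarrow> 'v::ab_group_add \<Rightarrow> 'v"
    and C :: "nat \<Rightarrow> nat \<Rightarrow> 'v set"
    and d d21 d10 d01 :: "'v \<Rightarrow> 'v"
  assumes bc: "bigraded_complex sc C d d21 d10 d01"
begin

lemmas bcu = bc[unfolded bigraded_complex_def]
lemma vs: "vector_space sc" by (rule bcu[THEN conjunct1])
lemma Ccl: "\<forall>p q. 0 \<in> C p q \<and> (\<forall>x\<in>C p q. \<forall>y\<in>C p q. x + y \<in> C p q) \<and> (\<forall>c. \<forall>x\<in>C p q. sc c x \<in> C p q)"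
  by (rule bcu[THEN conjunct2, THEN conjunct1])
lemma C0: "0 \<in> C p q" using Ccl by simp
lemma Cadd: "x \<in> C p q \<Longrightarrow> y \<in> C p q \<Longrightarrow> x + y \<in> C p q" using Ccl by simp
lemma Csc: "x \<in> C p q \<Longrightarrow> sc c x \<in> C p q" using Ccl by simp
lemma uniq: "\<exists>!c. decomp C v c" using bcu[THEN conjunct2, THEN conjunct2, THEN conjunct1] by simp
lemma lin_d: "Vector_Spaces.linear sc sc d" by (rule bcu[THEN conjunct2, THEN conjunct2, THEN conjunct2, THEN conjunct1])
lemma lin_d21: "Vector_Spaces.linear sc sc d21" by (rule bcu[THEN conjunct2, THEN conjunct2, THEN conjunct2, THEN conjunct2, THEN conjunct1])
lemma lin_d10: "Vector_Spaces.linear sc sc d10" by (rule bcu[THEN conjunct2, THEN conjunct2, THEN conjunct2, THEN conjunct2, THEN conjunct2, THEN conjunct1])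
lemma lin_d01: "Vector_Spaces.linear sc sc d01" by (rule bcu[THEN conjunct2, THEN conjunct2, THEN conjunct2, THEN conjunct2, THEN conjunct2, THEN conjunct2, THEN conjunct1])
lemmas bcr = bcu[THEN conjunct2, THEN conjunct2, THEN conjunct2, THEN conjunct2, THEN conjunct2, THEN conjunct2, THEN conjunct2]
lemma dd: "d (d v) = 0" using bcr[THEN conjunct1] by simp
lemma dsum: "d v = d21 v + d10 v + d01 v" using bcr[THEN conjunct2, THEN conjunct1] by simp
lemma d21C: "v \<in> C p q \<Longrightarrow> d21 v \<in> (if q = 0 then {0} else C (p+2) (q-1))"
  using bcr[THEN conjunct2, THEN conjunct2, THEN conjunct1] by simp
lemma d10C: "v \<in> C p q \<Longrightarrow> d10 v \<in> C (p+1) q"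
  using bcr[THEN conjunct2, THEN conjunct2, THEN conjunct2, THEN conjunct1] by simp
lemma d01C: "v \<in> C p q \<Longrightarrow> d01 v \<in> C p (q+1)"
  using bcr[THEN conjunct2, THEN conjunct2, THEN conjunct2, THEN conjunct2] by simp

sublocale V: vector_space sc by (rule vs)
lemma d_add: "d (x + y) = d x + d y" by (rule linD(1)[OF lin_d])
lemma d_scale: "d (sc c x) = sc c (d x)" by (rule linD(2)[OF lin_d])
lemma d_zero: "d 0 = 0" by (rule linD(3)[OF lin_d])
lemma d_diff: "d (x - y) = d x - d y" by (rule linD(4)[OF lin_d])
lemma d_neg: "d (- x) = - d x" by (rule linD(5)[OF lin_d])
lemma d_sum: "finite S \<Longrightarrow> d (\<Sum>a\<in>S. g a) = (\<Sum>a\<in>S. d (g a))" by (rule linD(6)[OF lin_d])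
lemma d21_add: "d21 (x + y) = d21 x + d21 y" by (rule linD(1)[OF lin_d21])
lemma d21_scale: "d21 (sc c x) = sc c (d21 x)" by (rule linD(2)[OF lin_d21])
lemma d21_zero: "d21 0 = 0" by (rule linD(3)[OF lin_d21])
lemma d21_diff: "d21 (x - y) = d21 x - d21 y" by (rule linD(4)[OF lin_d21])
lemma d21_neg: "d21 (- x) = - d21 x" by (rule linD(5)[OF lin_d21])
lemma d21_sum: "finite S \<Longrightarrow> d21 (\<Sum>a\<in>S. g a) = (\<Sum>a\<in>S. d21 (g a))" by (rule linD(6)[OF lin_d21])
lemma d10_add: "d10 (x + y) = d10 x + d10 y" by (rule linD(1)[OF lin_d10])
lemma d10_scale: "d10 (sc c x) = sc c (d10 x)" by (rule linD(2)[OF lin_d10])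
lemma d10_zero: "d10 0 = 0" by (rule linD(3)[OF lin_d10])
lemma d10_diff: "d10 (x - y) = d10 x - d10 y" by (rule linD(4)[OF lin_d10])
lemma d10_neg: "d10 (- x) = - d10 x" by (rule linD(5)[OF lin_d10])
lemma d10_sum: "finite S \<Longrightarrow> d10 (\<Sum>a\<in>S. g a) = (\<Sum>a\<in>S. d10 (g a))" by (rule linD(6)[OF lin_d10])
lemma d01_add: "d01 (x + y) = d01 x + d01 y" by (rule linD(1)[OF lin_d01])
lemma d01_scale: "d01 (sc c x) = sc c (d01 x)" by (rule linD(2)[OF lin_d01])
lemma d01_zero: "d01 0 = 0" by (rule linD(3)[OF lin_d01])
lemma d01_diff: "d01 (x - y) = d01 x - d01 y" by (rule linD(4)[OF lin_d01])
lemma d01_neg: "d01 (- x) = - d01 x" by (rule linD(5)[OF lin_d01])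
lemma d01_sum: "finite S \<Longrightarrow> d01 (\<Sum>a\<in>S. g a) = (\<Sum>a\<in>S. d01 (g a))" by (rule linD(6)[OF lin_d01])

lemma decomp_alt:
  "decomp C v c \<longleftrightarrow> (\<forall>p q. c p q \<in> C p q) \<and>
     (\<exists>U. finite U \<and> {(p,q). c p q \<noteq> 0} \<subseteq> U \<and> v = (\<Sum>(p,q)\<in>U. c p q))"
proof
  assume "decomp C v c" then show "(\<forall>p q. c p q \<in> C p q) \<and>
     (\<exists>U. finite U \<and> {(p,q). c p q \<noteq> 0} \<subseteq> U \<and> v = (\<Sum>(p,q)\<in>U. c p q))"
    unfolding decomp_def by blast
next
  assume h: "(\<forall>p q. c p q \<in> C p q) \<and>
     (\<exists>U. finite U \<and> {(p,q). c p q \<noteq> 0} \<subseteq> U \<and> v = (\<Sum>(p,q)\<in>U. c p q))"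
  then obtain U where U: "finite U" "{(p,q). c p q \<noteq> 0} \<subseteq> U" "v = (\<Sum>(p,q)\<in>U. c p q)" by blast
  have fin: "finite {(p,q). c p q \<noteq> 0}" using U finite_subset by blast
  have "(\<Sum>(p,q)\<in>{(p,q). c p q \<noteq> 0}. c p q) = (\<Sum>(p,q)\<in>U. c p q)"
    by (rule sum.mono_neutral_left[OF U(1) U(2)]) auto
  then show "decomp C v c" unfolding decomp_def using h fin U(3) by simp
qed

lemma comp_decomp: "decomp C v (comp C v)"
  unfolding comp_def by (rule theI'[OF uniq])

lemma comp_unique: "decomp C v c \<Longrightarrow> comp C v = c"
  unfolding comp_def by (rule the1_equality[OF uniq])

lemma comp_in: "comp C v p q \<in> C p q"
  using comp_decomp unfolding decomp_def by blast

lemma comp_fin: "finite {(p,q). comp C v p q \<noteq> 0}"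
  using comp_decomp unfolding decomp_def by blast

lemma comp_rep: "finite U \<Longrightarrow> {(p,q). comp C v p q \<noteq> 0} \<subseteq> U \<Longrightarrow> v = (\<Sum>(p,q)\<in>U. comp C v p q)"
proof -
  assume U: "finite U" "{(p,q). comp C v p q \<noteq> 0} \<subseteq> U"
  have "v = (\<Sum>(p,q)\<in>{(p,q). comp C v p q \<noteq> 0}. comp C v p q)"
    using comp_decomp unfolding decomp_def by blast
  also have "\<dots> = (\<Sum>(p,q)\<in>U. comp C v p q)"
    by (rule sum.mono_neutral_left[OF U(1) U(2)]) auto
  finally show ?thesis .
qed

lemma comp_ext: "(\<And>p q. comp C v p q = comp C w p q) \<Longrightarrow> v = w"
proof -
  assume h: "\<And>p q. comp C v p q = comp C w p q"
  have "v = (\<Sum>(p,q)\<in>{(p,q). comp C v p q \<noteq> 0}. comp C v p q)"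
    by (rule comp_rep[OF comp_fin]) auto
  also have "\<dots> = (\<Sum>(p,q)\<in>{(p,q). comp C w p q \<noteq> 0}. comp C w p q)"
    using h by simp
  also have "\<dots> = w"
    by (rule comp_rep[OF comp_fin, symmetric]) auto
  finally show ?thesis .
qed

lemma comp_add: "comp C (v + w) p q = comp C v p q + comp C w p q"
proof -
  let ?U = "{(p,q). comp C v p q \<noteq> 0} \<union> {(p,q). comp C w p q \<noteq> 0}"
  have fU: "finite ?U" using comp_fin by blast
  have "decomp C (v + w) (\<lambda>p q. comp C v p q + comp C w p q)"
    unfolding decomp_alt
  proof (intro conjI allI exI)
    show "comp C v p q + comp C w p q \<in> C p q" for p q by (intro Cadd comp_in)
    show "finite ?U" by fact
    show "{(p, q). comp C v p q + comp C w p q \<noteq> 0} \<subseteq> ?U" by auto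
    have "v = (\<Sum>(p,q)\<in>?U. comp C v p q)" by (rule comp_rep[OF fU]) auto
    moreover have "w = (\<Sum>(p,q)\<in>?U. comp C w p q)" by (rule comp_rep[OF fU]) auto
    ultimately show "v + w = (\<Sum>(p,q)\<in>?U. comp C v p q + comp C w p q)"
      by (simp add: sum.distrib case_prod_beta)
  qed
  then show ?thesis using comp_unique by metis
qed

lemma comp_zero: "comp C 0 p q = 0"
proof -
  have "decomp C 0 (\<lambda>p q. 0)" unfolding decomp_alt using C0 by auto
  then show ?thesis using comp_unique by metis
qed

lemma comp_neg: "comp C (- v) p q = - comp C v p q"
  using comp_add[of "-v" v p q] comp_zero[of p q] by (simp add: eq_neg_iff_add_eq_0)

lemma comp_diff: "comp C (v - w) p q = comp C v p q - comp C w p q"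
  using comp_add[of v "-w"] comp_neg by simp

lemma comp_scale: "comp C (sc a v) p q = sc a (comp C v p q)"
proof -
  let ?U = "{(p,q). comp C v p q \<noteq> 0}"
  have "decomp C (sc a v) (\<lambda>p q. sc a (comp C v p q))"
    unfolding decomp_alt
  proof (intro conjI allI exI)
    show "sc a (comp C v p q) \<in> C p q" for p q by (intro Csc comp_in)
    show "finite ?U" by (rule comp_fin)
    show "{(p, q). sc a (comp C v p q) \<noteq> 0} \<subseteq> ?U" by auto
    have "v = (\<Sum>(p,q)\<in>?U. comp C v p q)" by (rule comp_rep[OF comp_fin]) auto
    then have "sc a v = sc a (\<Sum>(p,q)\<in>?U. comp C v p q)" by simp
    also have "\<dots> = (\<Sum>x\<in>?U. sc a ((\<lambda>(p,q). comp C v p q) x))" by (rule V.scale_sum_right)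
    also have "\<dots> = (\<Sum>(p,q)\<in>?U. sc a (comp C v p q))" by (rule sum.cong) auto
    finally show "sc a v = (\<Sum>(p,q)\<in>?U. sc a (comp C v p q))" .
  qed
  then show ?thesis using comp_unique by metis
qed

lemma comp_single: "u \<in> C p q \<Longrightarrow> comp C u i j = (if i = p \<and> j = q then u else 0)"
proof -
  assume u: "u \<in> C p q"
  have "decomp C u (\<lambda>i j. if i = p \<and> j = q then u else 0)"
    unfolding decomp_alt
  proof (intro conjI allI exI)
    show "(if i = p \<and> j = q then u else 0) \<in> C i j" for i j using u C0 by auto
    show "finite {(p,q)}" by simp
    show "{(i, j). (if i = p \<and> j = q then u else 0) \<noteq> 0} \<subseteq> {(p,q)}" by auto
    show "u = (\<Sum>(i,j)\<in>{(p,q)}. if i = p \<and> j = q then u else 0)" by simp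
  qed
  then have "comp C u = (\<lambda>i j. if i = p \<and> j = q then u else 0)" by (rule comp_unique)
  then show ?thesis by simp
qed

lemma comp_sum: "finite S \<Longrightarrow> comp C (\<Sum>x\<in>S. f x) i j = (\<Sum>x\<in>S. comp C (f x) i j)"
  by (induction S rule: finite_induct) (simp_all add: comp_zero comp_add)

lemma lin_comp: "Vector_Spaces.linear sc sc (\<lambda>v. comp C v p q)"
  unfolding Vector_Spaces.linear_iff by (simp add: vs comp_add comp_scale)

lemma comp_d21: "v \<in> C p q \<Longrightarrow> comp C (d21 v) i j = (if (p,q) = (i-2, j+1) \<and> 2 \<le> i then d21 v else 0)"
proof -
  assume v: "v \<in> C p q"
  show ?thesis
  proof (cases "q = 0")
    case True then have "d21 v = 0" using d21C[OF v] by simp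
    then show ?thesis using True by (simp add: comp_zero)
  next
    case False then have m: "d21 v \<in> C (p+2) (q-1)" using d21C[OF v] by simp
    have "(i = p+2 \<and> j = q-1) \<longleftrightarrow> ((p,q) = (i-2, j+1) \<and> 2 \<le> i)" using False by auto
    then show ?thesis using comp_single[OF m, of i j] by simp
  qed
qed

lemma comp_d10: "v \<in> C p q \<Longrightarrow> comp C (d10 v) i j = (if (p,q) = (i-1, j) \<and> 1 \<le> i then d10 v else 0)"
proof -
  assume v: "v \<in> C p q"
  have m: "d10 v \<in> C (p+1) q" using d10C[OF v] by simp
  have "(i = p+1 \<and> j = q) \<longleftrightarrow> ((p,q) = (i-1, j) \<and> 1 \<le> i)" by auto
  then show ?thesis using comp_single[OF m, of i j] by simp
qed

lemma comp_d01: "v \<in> C p q \<Longrightarrow> comp C (d01 v) i j = (if (p,q) = (i, j-1) \<and> 1 \<le> j then d01 v else 0)"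
proof -
  assume v: "v \<in> C p q"
  have m: "d01 v \<in> C p (q+1)" using d01C[OF v] by simp
  have "(i = p \<and> j = q+1) \<longleftrightarrow> ((p,q) = (i, j-1) \<and> 1 \<le> j)" by auto
  then show ?thesis using comp_single[OF m, of i j] by simp
qed

lemma sum_delta_helper:
  fixes F :: "nat \<times> nat \<Rightarrow> 'v"
  assumes "finite U" "a \<in> U"
  shows "(\<Sum>t\<in>U. if t = a \<and> c then F t else 0) = (if c then F a else 0)"
proof (cases c)
  case True
  have "(\<Sum>t\<in>U. if t = a \<and> c then F t else 0) = (\<Sum>t\<in>U. if t = a then F t else 0)"
    using True by simp
  also have "\<dots> = F a" using assms by (simp add: sum.delta)
  finally show ?thesis using True by simp
next
  case False then show ?thesis by simp
qed

lemma comp_d: "comp C (d x) i j = (if 2 \<le> i then d21 (comp C x (i-2) (j+1)) else 0)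
   + (if 1 \<le> i then d10 (comp C x (i-1) j) else 0) + (if 1 \<le> j then d01 (comp C x i (j-1)) else 0)"
proof -
  define U where "U = {(p,q). comp C x p q \<noteq> 0} \<union> {(i-2,j+1),(i-1,j),(i,j-1)}"
  define g where "g t = comp C x (fst t) (snd t)" for t
  have fU: "finite U" using comp_fin by (simp add: U_def)
  have gin: "g t \<in> C (fst t) (snd t)" for t unfolding g_def by (rule comp_in)
  have "x = (\<Sum>(p,q)\<in>U. comp C x p q)" by (rule comp_rep[OF fU]) (auto simp: U_def)
  also have "\<dots> = (\<Sum>t\<in>U. g t)" by (rule sum.cong) (auto simp: g_def)
  finally have x: "x = (\<Sum>t\<in>U. g t)" .
  have trm: "comp C (d (g t)) i j = (if t = (i-2,j+1) \<and> 2 \<le> i then d21 (g t) else 0)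
     + (if t = (i-1,j) \<and> 1 \<le> i then d10 (g t) else 0) + (if t = (i,j-1) \<and> 1 \<le> j then d01 (g t) else 0)" for t
    using comp_d21[OF gin[of t], of i j] comp_d10[OF gin[of t], of i j] comp_d01[OF gin[of t], of i j]
    by (simp add: dsum[of "g t"] comp_add)
  have "comp C (d x) i j = (\<Sum>t\<in>U. comp C (d (g t)) i j)"
    by (subst x) (simp add: d_sum[OF fU] comp_sum[OF fU])
  also have "\<dots> = (\<Sum>t\<in>U. if t = (i-2,j+1) \<and> 2 \<le> i then d21 (g t) else 0)
     + (\<Sum>t\<in>U. if t = (i-1,j) \<and> 1 \<le> i then d10 (g t) else 0) + (\<Sum>t\<in>U. if t = (i,j-1) \<and> 1 \<le> j then d01 (g t) else 0)"
    by (simp add: trm sum.distrib)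
  also have "\<dots> = (if 2 \<le> i then d21 (g (i-2,j+1)) else 0)
     + (if 1 \<le> i then d10 (g (i-1,j)) else 0) + (if 1 \<le> j then d01 (g (i,j-1)) else 0)"
    using sum_delta_helper[OF fU] by (simp add: U_def)
  finally show ?thesis by (simp add: g_def)
qed

lemma Ck_van: "v \<in> Ck C k \<Longrightarrow> p + q \<noteq> k \<Longrightarrow> comp C v p q = 0"
  unfolding Ck_def by blast

lemma Ck_I: "(\<And>p q. p + q \<noteq> k \<Longrightarrow> comp C v p q = 0) \<Longrightarrow> v \<in> Ck C k"
  unfolding Ck_def by blast

lemma C_Ck: "u \<in> C p q \<Longrightarrow> p + q = k \<Longrightarrow> u \<in> Ck C k"
  by (rule Ck_I) (auto simp: comp_single)

lemma Ck_sub: "module.subspace sc (Ck C k)"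
  unfolding V.subspace_def
proof (intro conjI ballI allI)
  show "0 \<in> Ck C k" by (rule Ck_I) (simp add: comp_zero)
  show "x + y \<in> Ck C k" if "x \<in> Ck C k" "y \<in> Ck C k" for x y
    using that by (intro Ck_I) (simp add: comp_add Ck_van)
  show "sc c x \<in> Ck C k" if "x \<in> Ck C k" for c x
    using that by (intro Ck_I) (simp add: comp_scale Ck_van)
qed

lemma d_Ck: "x \<in> Ck C k \<Longrightarrow> d x \<in> Ck C (Suc k)"
proof (rule Ck_I)
  fix p q assume x: "x \<in> Ck C k" and pq: "p + q \<noteq> Suc k"
  have a: "(if 2 \<le> p then d21 (comp C x (p-2) (q+1)) else 0) = 0"
    using pq Ck_van[OF x, of "p-2" "q+1"] by (simp add: d21_zero)
  have b: "(if 1 \<le> p then d10 (comp C x (p-1) q) else 0) = 0"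
    using pq Ck_van[OF x, of "p-1" q] by (simp add: d10_zero)
  have c: "(if 1 \<le> q then d01 (comp C x p (q-1)) else 0) = 0"
    using pq Ck_van[OF x, of p "q-1"] by (simp add: d01_zero)
  show "comp C (d x) p q = 0" unfolding comp_d a b c by simp
qed

lemma comp_piq: "comp C (piq C q v) i j = (if q \<le> j then comp C v i j else 0)"
proof -
  let ?U = "{(p,q). comp C v p q \<noteq> 0}"
  let ?S = "{(i,j). comp C v i j \<noteq> 0 \<and> q \<le> j}"
  have "decomp C (piq C q v) (\<lambda>i j. if q \<le> j then comp C v i j else 0)"
    unfolding decomp_alt
  proof (intro conjI allI exI)
    show "(if q \<le> j then comp C v i j else 0) \<in> C i j" for i j by (simp add: comp_in C0)
    show "finite ?U" by (rule comp_fin)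
    show "{(i, j). (if q \<le> j then comp C v i j else 0) \<noteq> 0} \<subseteq> ?U" by auto
    show "piq C q v = (\<Sum>(i,j)\<in>?U. if q \<le> j then comp C v i j else 0)"
      unfolding piq_def
      by (rule sum.mono_neutral_cong_left[OF comp_fin]) (auto split: if_splits)
  qed
  then have "comp C (piq C q v) = (\<lambda>i j. if q \<le> j then comp C v i j else 0)" by (rule comp_unique)
  then show ?thesis by simp
qed

lemma piq_zero: "piq C q 0 = 0"
  by (rule comp_ext) (simp add: comp_piq comp_zero)

lemma deg3_cases: "(p::nat) + q = 3 \<Longrightarrow> (p = 0 \<and> q = 3) \<or> (p = 1 \<and> q = 2) \<or> (p = 2 \<and> q = 1) \<or> (p = 3 \<and> q = 0)"
  by arith

lemma Ck3_rep: "v \<in> Ck C 3 \<Longrightarrow> v = comp C v 3 0 + comp C v 2 1 + comp C v 1 2 + comp C v 0 3"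
proof (rule comp_ext)
  fix p q assume v: "v \<in> Ck C 3"
  show "comp C v p q = comp C (comp C v 3 0 + comp C v 2 1 + comp C v 1 2 + comp C v 0 3) p q"
  proof (cases "p + q = 3")
    case True then show ?thesis using deg3_cases[OF True] by (auto simp: comp_add comp_single[OF comp_in])
  next
    case False then show ?thesis using Ck_van[OF v False] by (auto simp: comp_add comp_single[OF comp_in])
  qed
qed

lemma piq3: "v \<in> Ck C 3 \<Longrightarrow> piq C 3 v = comp C v 0 3"
proof (rule comp_ext)
  fix p q assume v: "v \<in> Ck C 3"
  show "comp C (piq C 3 v) p q = comp C (comp C v 0 3) p q"
  proof (cases "p + q = 3")
    case True then show ?thesis using deg3_cases[OF True] by (auto simp: comp_piq comp_single[OF comp_in])
  next
    case False then show ?thesis using Ck_van[OF v False] by (auto simp: comp_piq comp_single[OF comp_in])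
  qed
qed

lemma piq2: "v \<in> Ck C 3 \<Longrightarrow> piq C 2 v = comp C v 1 2 + comp C v 0 3"
proof (rule comp_ext)
  fix p q assume v: "v \<in> Ck C 3"
  show "comp C (piq C 2 v) p q = comp C (comp C v 1 2 + comp C v 0 3) p q"
  proof (cases "p + q = 3")
    case True then show ?thesis using deg3_cases[OF True] by (auto simp: comp_add comp_piq comp_single[OF comp_in])
  next
    case False then show ?thesis using Ck_van[OF v False] by (auto simp: comp_add comp_piq comp_single[OF comp_in])
  qed
qed

lemma piq1: "v \<in> Ck C 3 \<Longrightarrow> piq C 1 v = comp C v 2 1 + comp C v 1 2 + comp C v 0 3"
proof (rule comp_ext)
  fix p q assume v: "v \<in> Ck C 3"
  show "comp C (piq C 1 v) p q = comp C (comp C v 2 1 + comp C v 1 2 + comp C v 0 3) p q"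
  proof (cases "p + q = 3")
    case True then show ?thesis using deg3_cases[OF True] by (auto simp: comp_add comp_piq comp_single[OF comp_in])
  next
    case False then show ?thesis using Ck_van[OF v False] by (auto simp: comp_add comp_piq comp_single[OF comp_in])
  qed
qed

lemma sub_kernel: "module.subspace sc S \<Longrightarrow> module.subspace sc {z\<in>S. comp C z p q = 0}"
  unfolding V.subspace_def by (auto simp: comp_add comp_scale comp_zero)

lemma sub_inter: "module.subspace sc S \<Longrightarrow> module.subspace sc T \<Longrightarrow> module.subspace sc (S \<inter> T)"
  unfolding V.subspace_def by auto

lemma sub_zero: "module.subspace sc {0}"
  unfolding V.subspace_def by auto

lemma Z_sub: "module.subspace sc (Zd C d 3)"
proof -
  have "module.subspace sc (Ck C 3)" by (rule Ck_sub)
  then show ?thesis unfolding V.subspace_def Zd_def by (auto simp: d_add d_scale d_zero)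
qed

lemma B_sub: "module.subspace sc (Bd C d 3)"
proof -
  have ck: "module.subspace sc (Ck C 3)" by (rule Ck_sub)
  show ?thesis unfolding V.subspace_def Bd_def
  proof (intro conjI ballI allI)
    have "0 \<in> Ck C 3" by (rule V.subspace_0[OF ck])
    moreover have "0 = d 0" by (simp add: d_zero)
    ultimately show "0 \<in> {y \<in> Ck C 3. \<exists>x. y = d x}" by blast
    show "x + y \<in> {y \<in> Ck C 3. \<exists>x. y = d x}" if "x \<in> {y \<in> Ck C 3. \<exists>x. y = d x}" "y \<in> {y \<in> Ck C 3. \<exists>x. y = d x}" for x y
    proof -
      from that obtain a b where "x = d a" "y = d b" "x \<in> Ck C 3" "y \<in> Ck C 3" by auto
      then have "x + y \<in> Ck C 3" "x + y = d (a + b)" using V.subspace_add[OF ck] by (auto simp: d_add)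
      then show ?thesis by blast
    qed
    show "sc c x \<in> {y \<in> Ck C 3. \<exists>x. y = d x}" if "x \<in> {y \<in> Ck C 3. \<exists>x. y = d x}" for c x
    proof -
      from that obtain a where "x = d a" "x \<in> Ck C 3" by auto
      then have "sc c x \<in> Ck C 3" "sc c x = d (sc c a)" using V.subspace_scale[OF ck] by (auto simp: d_scale)
      then show ?thesis by blast
    qed
  qed
qed

lemma BZ: "Bd C d 3 \<subseteq> Zd C d 3"
  unfolding Bd_def Zd_def using dd by auto

lemma N_C: "n \<in> Npq C d21 d01 p q \<Longrightarrow> n \<in> C p q"
  unfolding Npq_def by blast

lemma N_d: "n \<in> Npq C d21 d01 p q \<Longrightarrow> d n = d10 n"
  unfolding Npq_def using dsum by auto

lemma zero_N: "0 \<in> Npq C d21 d01 p q"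
  unfolding Npq_def by (simp add: C0 d01_zero d21_zero)

lemma zero_BN: "0 \<in> BN C d d21 d01 q k"
  unfolding BN_def Nq_def using zero_N d_zero by (auto intro: image_eqI[of 0 _ 0])

lemma BN4: "BN C d d21 d01 j 4 = d ` Npq C d21 d01 (3 - j) j" if "j \<le> 3"
  using that unfolding BN_def Nq_def by simp

lemma Z_Mk: "z \<in> Zd C d 3 \<Longrightarrow> z \<in> Mk C d d21 d01 3"
  unfolding Zd_def Mk_def using zero_BN by (auto simp: comp_zero)

lemma Mk_Ck: "\<eta> \<in> Mk C d d21 d01 3 \<Longrightarrow> \<eta> \<in> Ck C 3"
  unfolding Mk_def by blast

lemma Mk_obtain: "\<eta> \<in> Mk C d d21 d01 3 \<Longrightarrow> j \<le> 3 \<Longrightarrow> \<exists>n\<in>Npq C d21 d01 (3-j) j. comp C (d \<eta>) (4-j) j = d n"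
proof -
  assume h: "\<eta> \<in> Mk C d d21 d01 3" "j \<le> 3"
  then have "comp C (d \<eta>) (4-j) j \<in> BN C d d21 d01 j (3+1)" unfolding Mk_def by auto
  then show ?thesis using BN4[OF h(2)] by auto
qed

lemma corr:
  assumes eta: "\<eta> \<in> Mk C d d21 d01 3" and pz: "piq C q (d \<eta>) = 0" and q3: "q \<le> 3"
  shows "\<exists>z\<in>Zd C d 3. \<forall>i j. q \<le> j \<longrightarrow> comp C z i j = comp C \<eta> i j"
proof -
  obtain n0 where n0: "n0 \<in> Npq C d21 d01 3 0" "comp C (d \<eta>) 4 0 = d n0" using Mk_obtain[OF eta, of 0] by auto
  obtain n1 where n1: "n1 \<in> Npq C d21 d01 2 1" "comp C (d \<eta>) 3 1 = d n1" using Mk_obtain[OF eta, of 1] by auto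
  obtain n2 where n2: "n2 \<in> Npq C d21 d01 1 2" "comp C (d \<eta>) 2 2 = d n2" using Mk_obtain[OF eta, of 2] by auto
  have eC: "\<eta> \<in> Ck C 3" by (rule Mk_Ck[OF eta])
  have deC: "d \<eta> \<in> Ck C 4" using d_Ck[OF eC] by (simp add: numeral_eq_Suc)
  define m where "m k n = (if k < q then n else (0::'v))" for k n
  have mC: "m k n \<in> C p k" if "n \<in> Npq C d21 d01 p k" for k n p
    using N_C[OF that] C0 by (simp add: m_def)
  have dm: "d (m k n) = m k (d10 n)" if "n \<in> Npq C d21 d01 p k" for k n p
    using N_d[OF that] by (simp add: m_def d_zero)
  have dmC: "m k (d10 n) \<in> C (Suc p) k" if "n \<in> Npq C d21 d01 p k" for k n p
    using d10C[OF N_C[OF that]] C0 by (simp add: m_def)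
  define z where "z = \<eta> - m 0 n0 - m 1 n1 - m 2 n2"
  have ck: "module.subspace sc (Ck C 3)" by (rule Ck_sub)
  have zC: "z \<in> Ck C 3" unfolding z_def
  proof -
    have a: "m 0 n0 \<in> Ck C 3" by (rule C_Ck[OF mC[OF n0(1)]]) simp
    have b: "m 1 n1 \<in> Ck C 3" by (rule C_Ck[OF mC[OF n1(1)]]) simp
    have c: "m 2 n2 \<in> Ck C 3" by (rule C_Ck[OF mC[OF n2(1)]]) simp
    show "\<eta> - m 0 n0 - m 1 n1 - m 2 n2 \<in> Ck C 3"
      by (intro V.subspace_diff[OF ck] eC a b c)
  qed
  have cm: "comp C (m k n) i j = (if k < q \<and> i = p \<and> j = k then n else 0)" if "n \<in> Npq C d21 d01 p k" for k n p i j
    using comp_single[OF N_C[OF that]] by (simp add: m_def comp_zero)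
  have cz: "comp C z i j = comp C \<eta> i j" if "q \<le> j" for i j
    using that unfolding z_def comp_diff cm[OF n0(1)] cm[OF n1(1)] cm[OF n2(1)] by auto
  have hi: "comp C (d \<eta>) a b = 0" if "q \<le> b" for a b
    using comp_piq[of q "d \<eta>" a b] pz that by (simp add: comp_zero)
  have dz: "d z = 0"
  proof (rule comp_ext)
    fix a b
    have e: "comp C (d z) a b = comp C (d \<eta>) a b - comp C (m 0 (d10 n0)) a b - comp C (m 1 (d10 n1)) a b - comp C (m 2 (d10 n2)) a b"
      unfolding z_def d_diff comp_diff dm[OF n0(1)] dm[OF n1(1)] dm[OF n2(1)] ..
    have e2: "comp C (d z) a b = comp C (d \<eta>) a b - (if 0 < q \<and> a = 4 \<and> b = 0 then d10 n0 else 0)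
       - (if 1 < q \<and> a = 3 \<and> b = 1 then d10 n1 else 0) - (if 2 < q \<and> a = 2 \<and> b = 2 then d10 n2 else 0)"
    proof -
      have cdm: "comp C (m k (d10 n)) a b = (if k < q \<and> a = Suc p \<and> b = k then d10 n else 0)"
        if "n \<in> Npq C d21 d01 p k" for k n p
        using comp_single[OF d10C[OF N_C[OF that]]] by (simp add: m_def comp_zero)
      show ?thesis unfolding e cdm[OF n0(1)] cdm[OF n1(1)] cdm[OF n2(1)] by simp
    qed
    show "comp C (d z) a b = comp C 0 a b"
    proof (cases "q \<le> b")
      case True then show ?thesis unfolding e2 using hi[OF True] by (auto simp: comp_zero)
    next
      case False
      show ?thesis
      proof (cases "a + b = 4")
        case False
        then show ?thesis unfolding e2 using Ck_van[OF deC False] by (auto simp: comp_zero)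
      next
        case True
        have "b = 0 \<or> b = 1 \<or> b = 2" using \<open>\<not> q \<le> b\<close> q3 by arith
        then show ?thesis unfolding e2 using True \<open>\<not> q \<le> b\<close> n0 n1 n2 N_d
          by (auto simp: comp_zero)
      qed
    qed
  qed
  have "z \<in> Zd C d 3" unfolding Zd_def using zC dz by simp
  then show ?thesis using cz by blast
qed

lemma Zd_Ck: "z \<in> Zd C d 3 \<Longrightarrow> z \<in> Ck C 3" unfolding Zd_def by blast
lemma Zd_d: "z \<in> Zd C d 3 \<Longrightarrow> d z = 0" unfolding Zd_def by blast
lemma Bd_Ck: "z \<in> Bd C d 3 \<Longrightarrow> z \<in> Ck C 3" unfolding Bd_def by blast

lemma E1: "(\<lambda>z. comp C z 0 3) ` Zd C d 3 = Zcal C d d21 d01 3 3"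
proof
  show "(\<lambda>z. comp C z 0 3) ` Zd C d 3 \<subseteq> Zcal C d d21 d01 3 3"
  proof
    fix x assume "x \<in> (\<lambda>z. comp C z 0 3) ` Zd C d 3"
    then obtain z where z: "z \<in> Zd C d 3" "x = comp C z 0 3" by blast
    have "piq C 3 z = x" using piq3[OF Zd_Ck[OF z(1)]] z(2) by simp
    moreover have "piq C 3 (d z) = 0" using Zd_d[OF z(1)] piq_zero by simp
    ultimately show "x \<in> Zcal C d d21 d01 3 3" unfolding Zcal_def using Z_Mk[OF z(1)] by blast
  qed
  show "Zcal C d d21 d01 3 3 \<subseteq> (\<lambda>z. comp C z 0 3) ` Zd C d 3"
  proof
    fix x assume "x \<in> Zcal C d d21 d01 3 3"
    then obtain \<eta> where e: "x = piq C 3 \<eta>" "\<eta> \<in> Mk C d d21 d01 3" "piq C 3 (d \<eta>) = 0"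
      unfolding Zcal_def by blast
    obtain z where z: "z \<in> Zd C d 3" "\<forall>i j. 3 \<le> j \<longrightarrow> comp C z i j = comp C \<eta> i j"
      using corr[OF e(2) e(3)] by auto
    have "x = comp C z 0 3" using e(1) piq3[OF Mk_Ck[OF e(2)]] z(2) by simp
    then show "x \<in> (\<lambda>z. comp C z 0 3) ` Zd C d 3" using z(1) by blast
  qed
qed

lemma E2: "(\<lambda>z. comp C z 0 3) ` Bd C d 3 = B0 C d01 3"
proof
  show "(\<lambda>z. comp C z 0 3) ` Bd C d 3 \<subseteq> B0 C d01 3"
  proof
    fix y assume "y \<in> (\<lambda>z. comp C z 0 3) ` Bd C d 3"
    then obtain b x where b: "y = comp C b 0 3" "b = d x" unfolding Bd_def by blast
    have "y = d01 (comp C x 0 2)" using b comp_d[of x 0 3] by simp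
    then show "y \<in> B0 C d01 3" unfolding B0_def using comp_in by auto
  qed
  show "B0 C d01 3 \<subseteq> (\<lambda>z. comp C z 0 3) ` Bd C d 3"
  proof
    fix y assume "y \<in> B0 C d01 3"
    then obtain w where w: "w \<in> C 0 2" "y = d01 w" unfolding B0_def by auto
    have "w \<in> Ck C 2" by (rule C_Ck[OF w(1)]) simp
    then have "d w \<in> Ck C 3" using d_Ck[of w 2] by (simp add: numeral_eq_Suc)
    then have "d w \<in> Bd C d 3" unfolding Bd_def by blast
    moreover have "comp C (d w) 0 3 = y" using comp_d[of w 0 3] w comp_single[OF w(1)] by simp
    ultimately show "y \<in> (\<lambda>z. comp C z 0 3) ` Bd C d 3" by force
  qed
qed

lemma C12_03: "x \<in> C 1 2 \<Longrightarrow> comp C x 0 3 = 0" by (simp add: comp_single)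
lemma C21_12: "x \<in> C 2 1 \<Longrightarrow> comp C x 1 2 = 0" by (simp add: comp_single)
lemma C21_03: "x \<in> C 2 1 \<Longrightarrow> comp C x 0 3 = 0" by (simp add: comp_single)

lemma E3: "(\<lambda>z. comp C z 1 2) ` {z \<in> Zd C d 3. comp C z 0 3 = 0} = Zcal C d d21 d01 3 2 \<inter> C 1 2"
proof
  show "(\<lambda>z. comp C z 1 2) ` {z \<in> Zd C d 3. comp C z 0 3 = 0} \<subseteq> Zcal C d d21 d01 3 2 \<inter> C 1 2"
  proof
    fix x assume "x \<in> (\<lambda>z. comp C z 1 2) ` {z \<in> Zd C d 3. comp C z 0 3 = 0}"
    then obtain z where z: "z \<in> Zd C d 3" "comp C z 0 3 = 0" "x = comp C z 1 2" by blast
    have "piq C 2 z = x" using piq2[OF Zd_Ck[OF z(1)]] z by simp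
    moreover have "piq C 2 (d z) = 0" using Zd_d[OF z(1)] piq_zero by simp
    ultimately have "x \<in> Zcal C d d21 d01 3 2" unfolding Zcal_def using Z_Mk[OF z(1)] by blast
    then show "x \<in> Zcal C d d21 d01 3 2 \<inter> C 1 2" using z(3) comp_in by blast
  qed
  show "Zcal C d d21 d01 3 2 \<inter> C 1 2 \<subseteq> (\<lambda>z. comp C z 1 2) ` {z \<in> Zd C d 3. comp C z 0 3 = 0}"
  proof
    fix x assume x: "x \<in> Zcal C d d21 d01 3 2 \<inter> C 1 2"
    then obtain \<eta> where e: "x = piq C 2 \<eta>" "\<eta> \<in> Mk C d d21 d01 3" "piq C 2 (d \<eta>) = 0"
      unfolding Zcal_def by blast
    have xe: "x = comp C \<eta> 1 2 + comp C \<eta> 0 3" using e(1) piq2[OF Mk_Ck[OF e(2)]] by simp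
    have "comp C x 0 3 = comp C \<eta> 0 3"
      unfolding xe comp_add comp_single[OF comp_in] by simp
    then have e03: "comp C \<eta> 0 3 = 0" using C12_03 x by simp
    obtain z where z: "z \<in> Zd C d 3" "\<forall>i j. 2 \<le> j \<longrightarrow> comp C z i j = comp C \<eta> i j"
      using corr[OF e(2) e(3)] by auto
    have "comp C z 0 3 = 0" "x = comp C z 1 2" using z(2) e03 xe by auto
    then show "x \<in> (\<lambda>z. comp C z 1 2) ` {z \<in> Zd C d 3. comp C z 0 3 = 0}" using z(1) by blast
  qed
qed

lemma E4: "(\<lambda>z. comp C z 1 2) ` (Bd C d 3 \<inter> {z \<in> Zd C d 3. comp C z 0 3 = 0}) = Bcal C d 3 2 \<inter> C 1 2"
proof
  show "(\<lambda>z. comp C z 1 2) ` (Bd C d 3 \<inter> {z \<in> Zd C d 3. comp C z 0 3 = 0}) \<subseteq> Bcal C d 3 2 \<inter> C 1 2"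
  proof
    fix x assume "x \<in> (\<lambda>z. comp C z 1 2) ` (Bd C d 3 \<inter> {z \<in> Zd C d 3. comp C z 0 3 = 0})"
    then obtain z where z: "z \<in> Bd C d 3" "comp C z 0 3 = 0" "x = comp C z 1 2" by blast
    have "piq C 2 z = x" using piq2[OF Bd_Ck[OF z(1)]] z by simp
    then have "x \<in> piq C 2 ` Bd C d 3" using z(1) by (metis image_eqI)
    moreover have "x \<in> C 1 2" using z(3) comp_in by simp
    ultimately show "x \<in> Bcal C d 3 2 \<inter> C 1 2" unfolding Bcal_def by blast
  qed
  show "Bcal C d 3 2 \<inter> C 1 2 \<subseteq> (\<lambda>z. comp C z 1 2) ` (Bd C d 3 \<inter> {z \<in> Zd C d 3. comp C z 0 3 = 0})"
  proof
    fix x assume x: "x \<in> Bcal C d 3 2 \<inter> C 1 2"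
    then obtain b where b: "x = piq C 2 b" "b \<in> Bd C d 3" unfolding Bcal_def by blast
    have xe: "x = comp C b 1 2 + comp C b 0 3" using b piq2[OF Bd_Ck[OF b(2)]] by simp
    have "comp C x 0 3 = comp C b 0 3"
      unfolding xe comp_add comp_single[OF comp_in] by simp
    then have e03: "comp C b 0 3 = 0" using C12_03 x by simp
    have "x = comp C b 1 2" using xe e03 by simp
    moreover have "b \<in> Bd C d 3 \<inter> {z \<in> Zd C d 3. comp C z 0 3 = 0}" using b(2) BZ e03 by blast
    ultimately show "x \<in> (\<lambda>z. comp C z 1 2) ` (Bd C d 3 \<inter> {z \<in> Zd C d 3. comp C z 0 3 = 0})" by blast
  qed
qed

lemma kv_iff: "\<xi> \<in> ker_varrho C d d21 d10 d01 3 \<longleftrightarrow>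
   \<xi> \<in> Acal C d 3 \<and> \<xi> \<in> C 2 1 \<and> (\<exists>\<eta>. \<eta> \<in> Ck C 3 \<and> piq C 1 \<eta> = \<xi> \<and> piq C 1 (d \<eta>) = 0 \<and>
      d21 (comp C \<xi> 2 1) + d10 (comp C \<eta> 3 0) \<in> d ` Npq C d21 d01 3 0)"
  unfolding ker_varrho_def Jcal_def using BN4[of 0] by (simp add: numeral_eq_Suc)

lemma E5: "(\<lambda>z. comp C z 2 1) ` {z \<in> {z \<in> Zd C d 3. comp C z 0 3 = 0}. comp C z 1 2 = 0} = ker_varrho C d d21 d10 d01 3"
proof
  show "(\<lambda>z. comp C z 2 1) ` {z \<in> {z \<in> Zd C d 3. comp C z 0 3 = 0}. comp C z 1 2 = 0} \<subseteq> ker_varrho C d d21 d10 d01 3"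
  proof
    fix x assume "x \<in> (\<lambda>z. comp C z 2 1) ` {z \<in> {z \<in> Zd C d 3. comp C z 0 3 = 0}. comp C z 1 2 = 0}"
    then obtain z where z: "z \<in> Zd C d 3" "comp C z 0 3 = 0" "comp C z 1 2 = 0" "x = comp C z 2 1" by blast
    have zC: "z \<in> Ck C 3" by (rule Zd_Ck[OF z(1)])
    have p1: "piq C 1 z = x" using piq1[OF zC] z by simp
    have p1d: "piq C 1 (d z) = 0" using Zd_d[OF z(1)] piq_zero by simp
    have xC: "x \<in> C 2 1" using z(4) comp_in by simp
    have cx: "comp C x 2 1 = x" using comp_single[OF xC] by simp
    have "d21 (comp C x 2 1) + d10 (comp C z 3 0) = comp C (d z) 4 0"
      using comp_d[of z 4 0] cx z(4) by simp
    also have "\<dots> = 0" using Zd_d[OF z(1)] comp_zero by simp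
    finally have "d21 (comp C x 2 1) + d10 (comp C z 3 0) \<in> d ` Npq C d21 d01 3 0"
      using zero_N d_zero by (metis image_eqI)
    moreover have "x \<in> Acal C d 3" unfolding Acal_def using zC p1 p1d by blast
    ultimately show "x \<in> ker_varrho C d d21 d10 d01 3" unfolding kv_iff using xC zC p1 p1d by blast
  qed
  show "ker_varrho C d d21 d10 d01 3 \<subseteq> (\<lambda>z. comp C z 2 1) ` {z \<in> {z \<in> Zd C d 3. comp C z 0 3 = 0}. comp C z 1 2 = 0}"
  proof
    fix x assume "x \<in> ker_varrho C d d21 d10 d01 3"
    then obtain \<eta> n where xC: "x \<in> C 2 1" and eC: "\<eta> \<in> Ck C 3" and p1: "piq C 1 \<eta> = x"
      and p1d: "piq C 1 (d \<eta>) = 0" and n: "n \<in> Npq C d21 d01 3 0"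
      and dn: "d21 (comp C x 2 1) + d10 (comp C \<eta> 3 0) = d n"
      unfolding kv_iff by blast
    have xe: "x = comp C \<eta> 2 1 + comp C \<eta> 1 2 + comp C \<eta> 0 3" using p1 piq1[OF eC] by simp
    have e12: "comp C \<eta> 1 2 = 0"
      using C21_12[OF xC] unfolding xe comp_add comp_single[OF comp_in] by simp
    have e03: "comp C \<eta> 0 3 = 0"
      using C21_03[OF xC] unfolding xe comp_add comp_single[OF comp_in] by simp
    have x21: "x = comp C \<eta> 2 1" using xe e12 e03 by simp
    have cx: "comp C x 2 1 = x" using comp_single[OF xC] by simp
    have dn': "d21 (comp C \<eta> 2 1) + d10 (comp C \<eta> 3 0) = d10 n"
      using dn cx x21 N_d[OF n] by simp
    have nC: "n \<in> C 3 0" by (rule N_C[OF n])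
    have d10nC: "d10 n \<in> C 4 0" using d10C[OF nC] by simp
    define z where "z = \<eta> - n"
    have ck: "module.subspace sc (Ck C 3)" by (rule Ck_sub)
    have nCk: "n \<in> Ck C 3" by (rule C_Ck[OF nC]) simp
    have zC: "z \<in> Ck C 3" unfolding z_def by (rule V.subspace_diff[OF ck eC nCk])
    have deC: "d \<eta> \<in> Ck C 4" using d_Ck[OF eC] by (simp add: numeral_eq_Suc)
    have hi: "comp C (d \<eta>) a b = 0" if "1 \<le> b" for a b
      using comp_piq[of 1 "d \<eta>" a b] p1d that by (simp add: comp_zero)
    have dz: "d z = 0"
    proof (rule comp_ext)
      fix a b
      have e: "comp C (d z) a b = comp C (d \<eta>) a b - (if a = 4 \<and> b = 0 then d10 n else 0)"
        unfolding z_def d_diff N_d[OF n] comp_diff comp_single[OF d10nC] by simp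
      show "comp C (d z) a b = comp C 0 a b"
      proof (cases "1 \<le> b")
        case True then show ?thesis unfolding e using hi[OF True] by (simp add: comp_zero)
      next
        case False
        then have b0: "b = 0" by simp
        show ?thesis
        proof (cases "a = 4")
          case True
          have "comp C (d \<eta>) 4 0 = d10 n" using comp_d[of \<eta> 4 0] dn' by simp
          then show ?thesis unfolding e using True b0 by (simp add: comp_zero)
        next
          case False
          then have "a + b \<noteq> 4" using b0 by simp
          then show ?thesis unfolding e using Ck_van[OF deC] False by (simp add: comp_zero)
        qed
      qed
    qed
    have zZ: "z \<in> Zd C d 3" unfolding Zd_def using zC dz by simp
    have cn: "comp C n i j = (if i = 3 \<and> j = 0 then n else 0)" for i j by (rule comp_single[OF nC])
    have "comp C z 0 3 = 0" "comp C z 1 2 = 0" "comp C z 2 1 = x"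
      unfolding z_def comp_diff cn using e03 e12 x21 by simp_all
    then show "x \<in> (\<lambda>z. comp C z 2 1) ` {z \<in> {z \<in> Zd C d 3. comp C z 0 3 = 0}. comp C z 1 2 = 0}"
      using zZ by force
  qed
qed

lemma E6: "(\<lambda>z. comp C z 2 1) ` (Bd C d 3 \<inter> {z \<in> {z \<in> Zd C d 3. comp C z 0 3 = 0}. comp C z 1 2 = 0}) = Bcal C d 3 1 \<inter> C 2 1"
proof
  show "(\<lambda>z. comp C z 2 1) ` (Bd C d 3 \<inter> {z \<in> {z \<in> Zd C d 3. comp C z 0 3 = 0}. comp C z 1 2 = 0}) \<subseteq> Bcal C d 3 1 \<inter> C 2 1"
  proof
    fix x assume "x \<in> (\<lambda>z. comp C z 2 1) ` (Bd C d 3 \<inter> {z \<in> {z \<in> Zd C d 3. comp C z 0 3 = 0}. comp C z 1 2 = 0})"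
    then obtain z where z: "z \<in> Bd C d 3" "comp C z 0 3 = 0" "comp C z 1 2 = 0" "x = comp C z 2 1" by blast
    have "piq C 1 z = x" using piq1[OF Bd_Ck[OF z(1)]] z by simp
    then have "x \<in> piq C 1 ` Bd C d 3" using z(1) by (metis image_eqI)
    moreover have "x \<in> C 2 1" using z(4) comp_in by simp
    ultimately show "x \<in> Bcal C d 3 1 \<inter> C 2 1" unfolding Bcal_def by blast
  qed
  show "Bcal C d 3 1 \<inter> C 2 1 \<subseteq> (\<lambda>z. comp C z 2 1) ` (Bd C d 3 \<inter> {z \<in> {z \<in> Zd C d 3. comp C z 0 3 = 0}. comp C z 1 2 = 0})"
  proof
    fix x assume x: "x \<in> Bcal C d 3 1 \<inter> C 2 1"
    then obtain b where b: "x = piq C 1 b" "b \<in> Bd C d 3" unfolding Bcal_def by blast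
    have xC: "x \<in> C 2 1" using x by blast
    have xe: "x = comp C b 2 1 + comp C b 1 2 + comp C b 0 3" using b piq1[OF Bd_Ck[OF b(2)]] by simp
    have e12: "comp C b 1 2 = 0"
      using C21_12[OF xC] unfolding xe comp_add comp_single[OF comp_in] by simp
    have e03: "comp C b 0 3 = 0"
      using C21_03[OF xC] unfolding xe comp_add comp_single[OF comp_in] by simp
    have "x = comp C b 2 1" using xe e12 e03 by simp
    moreover have "b \<in> Bd C d 3 \<inter> {z \<in> {z \<in> Zd C d 3. comp C z 0 3 = 0}. comp C z 1 2 = 0}" using b(2) BZ e03 e12 by blast
    ultimately show "x \<in> (\<lambda>z. comp C z 2 1) ` (Bd C d 3 \<inter> {z \<in> {z \<in> Zd C d 3. comp C z 0 3 = 0}. comp C z 1 2 = 0})" by blast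
  qed
qed

abbreviation "Z0s \<equiv> {z \<in> {z \<in> {z \<in> Zd C d 3. comp C z 0 3 = 0}. comp C z 1 2 = 0}. comp C z 2 1 = 0}"

lemma Z0_eq: "z \<in> Ck C 3 \<Longrightarrow> comp C z 0 3 = 0 \<Longrightarrow> comp C z 1 2 = 0 \<Longrightarrow> comp C z 2 1 = 0 \<Longrightarrow> z = comp C z 3 0"
  using Ck3_rep[of z] by simp

lemma E7: "(\<lambda>z. comp C z 3 0) ` Z0s = ZN C d d21 d01 0 3"
proof
  show "(\<lambda>z. comp C z 3 0) ` Z0s \<subseteq> ZN C d d21 d01 0 3"
  proof
    fix x assume "x \<in> (\<lambda>z. comp C z 3 0) ` Z0s"
    then obtain z where z: "z \<in> Zd C d 3" "comp C z 0 3 = 0" "comp C z 1 2 = 0" "comp C z 2 1 = 0" "x = comp C z 3 0" by blast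
    have zx: "z = x" using Z0_eq[OF Zd_Ck[OF z(1)] z(2-4)] z(5) by simp
    have xC: "x \<in> C 3 0" using z(5) comp_in by simp
    have dx: "d x = 0" using Zd_d[OF z(1)] zx by simp
    have c31: "comp C (d z) 3 1 = d21 (comp C z 1 2) + d10 (comp C z 2 1) + d01 (comp C z 3 0)"
      using comp_d[of z 3 1] by (simp add: numeral_eq_Suc)
    have "d01 x = comp C (d z) 3 1" unfolding c31 z(3) z(4) z(5) d21_zero d10_zero by simp
    also have "\<dots> = 0" using Zd_d[OF z(1)] comp_zero by simp
    finally have d01x: "d01 x = 0" .
    have d21x: "d21 x = 0" using d21C[OF xC] by simp
    show "x \<in> ZN C d d21 d01 0 3" unfolding ZN_def Nq_def Npq_def using xC dx d01x d21x by simp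
  qed
  show "ZN C d d21 d01 0 3 \<subseteq> (\<lambda>z. comp C z 3 0) ` Z0s"
  proof
    fix x assume "x \<in> ZN C d d21 d01 0 3"
    then have xC: "x \<in> C 3 0" and dx: "d x = 0" unfolding ZN_def Nq_def Npq_def by auto
    have xCk: "x \<in> Ck C 3" by (rule C_Ck[OF xC]) simp
    have cx: "comp C x i j = (if i = 3 \<and> j = 0 then x else 0)" for i j by (rule comp_single[OF xC])
    have "x \<in> Z0s" unfolding Zd_def using xCk dx cx by simp
    moreover have "comp C x 3 0 = x" using cx by simp
    ultimately show "x \<in> (\<lambda>z. comp C z 3 0) ` Z0s" by force
  qed
qed

lemma E8: "(\<lambda>z. comp C z 3 0) ` (Bd C d 3 \<inter> Z0s) = Bd C d 3 \<inter> C 3 0"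
proof
  show "(\<lambda>z. comp C z 3 0) ` (Bd C d 3 \<inter> Z0s) \<subseteq> Bd C d 3 \<inter> C 3 0"
  proof
    fix x assume "x \<in> (\<lambda>z. comp C z 3 0) ` (Bd C d 3 \<inter> Z0s)"
    then obtain z where z: "z \<in> Bd C d 3" "comp C z 0 3 = 0" "comp C z 1 2 = 0" "comp C z 2 1 = 0" "x = comp C z 3 0" by blast
    have zx: "z = x" using Z0_eq[OF Bd_Ck[OF z(1)] z(2-4)] z(5) by simp
    have "x \<in> Bd C d 3" using z(1) zx by simp
    moreover have "x \<in> C 3 0" using z(5) comp_in by simp
    ultimately show "x \<in> Bd C d 3 \<inter> C 3 0" by blast
  qed
  show "Bd C d 3 \<inter> C 3 0 \<subseteq> (\<lambda>z. comp C z 3 0) ` (Bd C d 3 \<inter> Z0s)"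
  proof
    fix x assume x: "x \<in> Bd C d 3 \<inter> C 3 0"
    then have xC: "x \<in> C 3 0" and xB: "x \<in> Bd C d 3" by auto
    have cx: "comp C x i j = (if i = 3 \<and> j = 0 then x else 0)" for i j by (rule comp_single[OF xC])
    have "x \<in> Bd C d 3 \<inter> Z0s" using xB BZ cx by auto
    moreover have "comp C x 3 0 = x" using cx by simp
    ultimately show "x \<in> (\<lambda>z. comp C z 3 0) ` (Bd C d 3 \<inter> Z0s)" by force
  qed
qed

lemma Zm_zero: "z \<in> Z0s \<Longrightarrow> comp C z 3 0 = 0 \<Longrightarrow> z = 0"
  using Z0_eq[of z] Zd_Ck by auto

lemma zero_Z: "0 \<in> Zd C d 3" using V.subspace_0[OF Z_sub] .
lemma zero_B: "0 \<in> Bd C d 3" using V.subspace_0[OF B_sub] .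

lemma main:
  shows "quot_sum_iso sc (Bd C d 3) {0}
           [(Bd C d 3 \<inter> C 3 0, {0}), (Bcal C d 3 1 \<inter> C 2 1, {0}),
            (Bcal C d 3 2 \<inter> C 1 2, {0}), (B0 C d01 3, {0})]
       \<and> quot_sum_iso sc (Zd C d 3) {0}
           [(ZN C d d21 d01 0 3, {0}), (ker_varrho C d d21 d10 d01 3, {0}),
            (Zcal C d d21 d01 3 2 \<inter> C 1 2, {0}), (Zcal C d d21 d01 3 3, {0})]
       \<and> quot_sum_iso sc (Zd C d 3) (Bd C d 3)
           [(ZN C d d21 d01 0 3, Bd C d 3 \<inter> C 3 0),
            (ker_varrho C d d21 d10 d01 3, Bcal C d 3 1 \<inter> C 2 1),
            (Zcal C d d21 d01 3 2 \<inter> C 1 2, Bcal C d 3 2 \<inter> C 1 2),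
            (Zcal C d d21 d01 3 3, B0 C d01 3)]"
proof -
  define Z3 where "Z3 = Zd C d 3"
  define Z2 where "Z2 = {z \<in> Z3. comp C z 0 3 = 0}"
  define Z1 where "Z1 = {z \<in> Z2. comp C z 1 2 = 0}"
  define Z0 where "Z0 = {z \<in> Z1. comp C z 2 1 = 0}"
  define Zm where "Zm = {z \<in> Z0. comp C z 3 0 = 0}"
  define B where "B = Bd C d 3"
  have Z0s: "Z0s = Z0" unfolding Z0_def Z1_def Z2_def Z3_def ..
  have sZ3: "module.subspace sc Z3" unfolding Z3_def by (rule Z_sub)
  have sZ2: "module.subspace sc Z2" unfolding Z2_def by (rule sub_kernel[OF sZ3])
  have sZ1: "module.subspace sc Z1" unfolding Z1_def by (rule sub_kernel[OF sZ2])
  have sZ0: "module.subspace sc Z0" unfolding Z0_def by (rule sub_kernel[OF sZ1])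
  have sB: "module.subspace sc B" unfolding B_def by (rule B_sub)
  have sB2: "module.subspace sc (B \<inter> Z2)" by (rule sub_inter[OF sB sZ2])
  have sB1: "module.subspace sc (B \<inter> Z1)" by (rule sub_inter[OF sB sZ1])
  have sB0: "module.subspace sc (B \<inter> Z0)" by (rule sub_inter[OF sB sZ0])
  have s0: "module.subspace sc {0}" by (rule sub_zero)
  have BZ3: "B \<subseteq> Z3" unfolding B_def Z3_def by (rule BZ)
  have Zm0: "Zm = {0}"
  proof
    show "Zm \<subseteq> {0}" using Zm_zero unfolding Zm_def Z0s[symmetric] by blast
    show "{0} \<subseteq> Zm" unfolding Zm_def Z0_def Z1_def Z2_def Z3_def using zero_Z by (simp add: comp_zero)
  qed
  have zZ0: "0 \<in> Z0" using Zm0 unfolding Zm_def by blast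
  have zZ1: "0 \<in> Z1" using zZ0 unfolding Z0_def by blast
  have zZ2: "0 \<in> Z2" using zZ1 unfolding Z1_def by blast
  have zB: "0 \<in> B" unfolding B_def by (rule zero_B)
  have Y0: "(\<lambda>z. comp C z p q) ` {0} = {0}" for p q by (simp add: comp_zero)
  have e1: "(\<lambda>z. comp C z 0 3) ` Z3 = Zcal C d d21 d01 3 3" unfolding Z3_def by (rule E1)
  have e2: "(\<lambda>z. comp C z 0 3) ` B = B0 C d01 3" unfolding B_def by (rule E2)
  have e3: "(\<lambda>z. comp C z 1 2) ` Z2 = Zcal C d d21 d01 3 2 \<inter> C 1 2" unfolding Z2_def Z3_def by (rule E3)
  have e4: "(\<lambda>z. comp C z 1 2) ` (B \<inter> Z2) = Bcal C d 3 2 \<inter> C 1 2" unfolding B_def Z2_def Z3_def by (rule E4)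
  have e5: "(\<lambda>z. comp C z 2 1) ` Z1 = ker_varrho C d d21 d10 d01 3" unfolding Z1_def Z2_def Z3_def by (rule E5)
  have e6: "(\<lambda>z. comp C z 2 1) ` (B \<inter> Z1) = Bcal C d 3 1 \<inter> C 2 1" unfolding B_def Z1_def Z2_def Z3_def by (rule E6)
  have e7: "(\<lambda>z. comp C z 3 0) ` Z0 = ZN C d d21 d01 0 3" unfolding Z0s[symmetric] by (rule E7)
  have e8: "(\<lambda>z. comp C z 3 0) ` (B \<inter> Z0) = Bd C d 3 \<inter> C 3 0" unfolding Z0s[symmetric] B_def by (rule E8)
  note lc = lin_comp
  have t0: "quot_sum_iso sc Zm (B \<inter> Zm) []" by (rule qsi_base) (use Zm0 zB in auto)
  have t1: "quot_sum_iso sc Z0 (B \<inter> Z0) ([] @ [(ZN C d d21 d01 0 3, Bd C d 3 \<inter> C 3 0)])"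
    by (rule qsi_peel[OF vs sZ0 sB0 _ lc, where A'=Zm and B'="B \<inter> Zm"])
       (use t0 e7 e8 in \<open>auto simp: Zm_def\<close>)
  have t2: "quot_sum_iso sc Z1 (B \<inter> Z1) (([] @ [(ZN C d d21 d01 0 3, Bd C d 3 \<inter> C 3 0)]) @
      [(ker_varrho C d d21 d10 d01 3, Bcal C d 3 1 \<inter> C 2 1)])"
    by (rule qsi_peel[OF vs sZ1 sB1 _ lc, where A'=Z0 and B'="B \<inter> Z0"])
       (use t1 e5 e6 in \<open>auto simp: Z0_def\<close>)
  have t3: "quot_sum_iso sc Z2 (B \<inter> Z2) ((([] @ [(ZN C d d21 d01 0 3, Bd C d 3 \<inter> C 3 0)]) @
      [(ker_varrho C d d21 d10 d01 3, Bcal C d 3 1 \<inter> C 2 1)]) @ [(Zcal C d d21 d01 3 2 \<inter> C 1 2, Bcal C d 3 2 \<inter> C 1 2)])"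
    by (rule qsi_peel[OF vs sZ2 sB2 _ lc, where A'=Z1 and B'="B \<inter> Z1"])
       (use t2 e3 e4 in \<open>auto simp: Z1_def\<close>)
  have t4: "quot_sum_iso sc Z3 B (((([] @ [(ZN C d d21 d01 0 3, Bd C d 3 \<inter> C 3 0)]) @
      [(ker_varrho C d d21 d10 d01 3, Bcal C d 3 1 \<inter> C 2 1)]) @ [(Zcal C d d21 d01 3 2 \<inter> C 1 2, Bcal C d 3 2 \<inter> C 1 2)])
      @ [(Zcal C d d21 d01 3 3, B0 C d01 3)])"
    by (rule qsi_peel[OF vs sZ3 sB BZ3 lc, where A'=Z2 and B'="B \<inter> Z2"])
       (use t3 e1 e2 BZ3 in \<open>auto simp: Z2_def\<close>)
  have u0: "quot_sum_iso sc Zm {0} []" by (rule qsi_base) (use Zm0 in auto)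
  have u1: "quot_sum_iso sc Z0 {0} ([] @ [(ZN C d d21 d01 0 3, {0})])"
    by (rule qsi_peel[OF vs sZ0 s0 _ lc, where A'=Zm and B'="{0}"])
       (use u0 e7 Y0 zZ0 Zm0 in \<open>auto simp: Zm_def\<close>)
  have u2: "quot_sum_iso sc Z1 {0} (([] @ [(ZN C d d21 d01 0 3, {0})]) @ [(ker_varrho C d d21 d10 d01 3, {0})])"
    by (rule qsi_peel[OF vs sZ1 s0 _ lc, where A'=Z0 and B'="{0}"])
       (use u1 e5 Y0 zZ1 zZ0 in \<open>auto simp: Z0_def\<close>)
  have u3: "quot_sum_iso sc Z2 {0} ((([] @ [(ZN C d d21 d01 0 3, {0})]) @ [(ker_varrho C d d21 d10 d01 3, {0})])
      @ [(Zcal C d d21 d01 3 2 \<inter> C 1 2, {0})])"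
    by (rule qsi_peel[OF vs sZ2 s0 _ lc, where A'=Z1 and B'="{0}"])
       (use u2 e3 Y0 zZ2 zZ1 in \<open>auto simp: Z1_def\<close>)
  have u4: "quot_sum_iso sc Z3 {0} (((([] @ [(ZN C d d21 d01 0 3, {0})]) @ [(ker_varrho C d d21 d10 d01 3, {0})])
      @ [(Zcal C d d21 d01 3 2 \<inter> C 1 2, {0})]) @ [(Zcal C d d21 d01 3 3, {0})])"
    by (rule qsi_peel[OF vs sZ3 s0 _ lc, where A'=Z2 and B'="{0}"])
       (use u3 e1 Y0 zZ2 in \<open>auto simp: Z2_def\<close>)
  have v0: "quot_sum_iso sc (B \<inter> Zm) {0} []" by (rule qsi_base) (use Zm0 zB in auto)
  have v1: "quot_sum_iso sc (B \<inter> Z0) {0} ([] @ [(Bd C d 3 \<inter> C 3 0, {0})])"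
    by (rule qsi_peel[OF vs sB0 s0 _ lc, where A'="B \<inter> Zm" and B'="{0}"])
       (use v0 e8 Y0 zZ0 zB Zm0 in \<open>auto simp: Zm_def\<close>)
  have v2: "quot_sum_iso sc (B \<inter> Z1) {0} (([] @ [(Bd C d 3 \<inter> C 3 0, {0})]) @ [(Bcal C d 3 1 \<inter> C 2 1, {0})])"
    by (rule qsi_peel[OF vs sB1 s0 _ lc, where A'="B \<inter> Z0" and B'="{0}"])
       (use v1 e6 Y0 zZ1 zZ0 zB in \<open>auto simp: Z0_def\<close>)
  have v3: "quot_sum_iso sc (B \<inter> Z2) {0} ((([] @ [(Bd C d 3 \<inter> C 3 0, {0})]) @ [(Bcal C d 3 1 \<inter> C 2 1, {0})])
      @ [(Bcal C d 3 2 \<inter> C 1 2, {0})])"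
    by (rule qsi_peel[OF vs sB2 s0 _ lc, where A'="B \<inter> Z1" and B'="{0}"])
       (use v2 e4 Y0 zZ2 zZ1 zB in \<open>auto simp: Z1_def\<close>)
  have v4: "quot_sum_iso sc B {0} (((([] @ [(Bd C d 3 \<inter> C 3 0, {0})]) @ [(Bcal C d 3 1 \<inter> C 2 1, {0})])
      @ [(Bcal C d 3 2 \<inter> C 1 2, {0})]) @ [(B0 C d01 3, {0})])"
    by (rule qsi_peel[OF vs sB s0 _ lc, where A'="B \<inter> Z2" and B'="{0}"])
       (use v3 e2 Y0 zZ2 zB BZ3 in \<open>auto simp: Z2_def\<close>)
  show ?thesis using t4 u4 v4 unfolding B_def Z3_def by simp
qed

end

theorem corollary5p8:
  fixes sc :: "'r::field \<Rightarrow> 'v::ab_group_add \<Rightarrow> 'v"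
    and C :: "nat \<Rightarrow> nat \<Rightarrow> 'v set"
    and d d21 d10 d01 :: "'v \<Rightarrow> 'v"
  assumes "bigraded_complex sc C d d21 d10 d01"
  shows "quot_sum_iso sc (Bd C d 3) {0}
           [(Bd C d 3 \<inter> C 3 0, {0}), (Bcal C d 3 1 \<inter> C 2 1, {0}),
            (Bcal C d 3 2 \<inter> C 1 2, {0}), (B0 C d01 3, {0})]
       \<and> quot_sum_iso sc (Zd C d 3) {0}
           [(ZN C d d21 d01 0 3, {0}), (ker_varrho C d d21 d10 d01 3, {0}),
            (Zcal C d d21 d01 3 2 \<inter> C 1 2, {0}), (Zcal C d d21 d01 3 3, {0})]
       \<and> quot_sum_iso sc (Zd C d 3) (Bd C d 3)
           [(ZN C d d21 d01 0 3, Bd C d 3 \<inter> C 3 0),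
            (ker_varrho C d d21 d10 d01 3, Bcal C d 3 1 \<inter> C 2 1),
            (Zcal C d d21 d01 3 2 \<inter> C 1 2, Bcal C d 3 2 \<inter> C 1 2),
            (Zcal C d d21 d01 3 3, B0 C d01 3)]"
  using BCx.main[OF BCx.intro[OF assms]] .

end
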